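(* For every integer $n>2$ there exist two pedigrees $\mathcal{T}(X_0)$ and $\mathcal{U}(X_0)$ on the same extant set $X_0$ with $|X_0|=n$ such that (i) for every $Y\subset X_0$ with $|Y|=n-1$ there is an isomorphism from the sub-pedigree $\mathcal{T}(Y)$ to the sub-pedigree $\mathcal{U}(Y)$ fixing every vertex of $Y$; but (ii) there is no isomorphism from $\mathcal{T}(X_0)$ to $\mathcal{U}(X_0)$ fixing every vertex of $X_0$. In particular, for every $n>3$ there are pedigrees of order $n$ that are not $(n-1)$-reconstructible.
   Context: A (general) pedigree $\mathcal{T}(X_0)$ on a set $X_0$ is a finite directed graph on a vertex set $V$ such that: every vertex has out-degree $0$ or $2$; $X_0\subseteq V$ and every vertex of $X_0$ has in-degree $0$; there are no isolated vertices. Vertices of $X_0$ are called extant; $|X_0|$ is the order of the pedigree. If $uv$ is an arc, $v$ is a parent of $u$. A vertex $v$ is an ancestor of $u$ (and $u$ a descendant of $v$) if there is a directed path from $u$ to $v$ (every vertex is its own ancestor and descendant). For $Y\subseteq X_0$, the sub-pedigree $\mathcal{T}(Y)$ is obtained from $\mathcal{T}(X_0)$ by deleting every vertex that has no descendant in $Y$; its extant set is $Y$. An isomorphism of pedigrees is a bijection of vertex sets preserving arcs in both directions. For $n>r>2$, two pedigrees of order $n$ on the same extant set $X_0$ are $r$-hypomorphic if for every $Y\subset X_0$ with $|Y|=r$ there is an isomorphism $\mathcal{T}(Y)\to\mathcal{U}(Y)$ fixing each vertex of $Y$; $\mathcal{T}(X_0)$ is $r$-reconstructible if every pedigree $\mathcal{U}(X_0)$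 that is $r$-hypomorphic to it is isomorphic to it via an isomorphism fixing each vertex of $X_0$. *)

theory Defs
  imports Main
begin

text \<open>A pedigree is a finite loopless simple digraph given by a vertex set V and an arc
set A (an arc (u,v) means v is a parent of u), together with an extant set X0.\<close>

definition pedigree :: "'v set \<Rightarrow> ('v \<times> 'v) set \<Rightarrow> 'v set \<Rightarrow> bool" where
  "pedigree V A X0 \<longleftrightarrow>
     finite V \<and> A \<subseteq> V \<times> V \<and> (\<forall>v. (v, v) \<notin> A) \<and>
     (\<forall>v\<in>V. card {w. (v, w) \<in> A} = 0 \<or> card {w. (v, w) \<in> A} = 2) \<and>
     X0 \<subseteq> V \<and> (\<forall>x\<in>X0. \<forall>u. (u, x) \<notin> A) \<and>
     (\<forall>v\<in>V. \<exists>w. (v, w) \<in> A \<or> (w, v) \<in> A)"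

definition sub_vertices :: "'v set \<Rightarrow> ('v \<times> 'v) set \<Rightarrow> 'v set \<Rightarrow> 'v set" where
  "sub_vertices V A Y = {v \<in> V. \<exists>y\<in>Y. (y, v) \<in> A\<^sup>*}"

definition sub_arcs :: "'v set \<Rightarrow> ('v \<times> 'v) set \<Rightarrow> 'v set \<Rightarrow> ('v \<times> 'v) set" where
  "sub_arcs V A Y = A \<inter> (sub_vertices V A Y \<times> sub_vertices V A Y)"

definition iso_fixing :: "('v \<Rightarrow> 'w) \<Rightarrow> 'v set \<Rightarrow> ('v \<times> 'v) set \<Rightarrow> 'w set \<Rightarrow> ('w \<times> 'w) set
    \<Rightarrow> bool" where
  "iso_fixing f V1 A1 V2 A2 \<longleftrightarrow>
     bij_betw f V1 V2 \<and> (\<forall>u\<in>V1. \<forall>v\<in>V1. (u, v) \<in> A1 \<longleftrightarrow> (f u, f v) \<in> A2)"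

definition sub_iso :: "'v set \<Rightarrow> ('v \<times> 'v) set \<Rightarrow> 'v set \<Rightarrow> ('v \<times> 'v) set \<Rightarrow> 'v set \<Rightarrow> bool" where
  "sub_iso V1 A1 V2 A2 Y \<longleftrightarrow>
     (\<exists>f. iso_fixing f (sub_vertices V1 A1 Y) (sub_arcs V1 A1 Y)
                      (sub_vertices V2 A2 Y) (sub_arcs V2 A2 Y) \<and> (\<forall>y\<in>Y. f y = y))"

definition hypomorphic :: "nat \<Rightarrow> 'v set \<Rightarrow> ('v \<times> 'v) set \<Rightarrow> 'v set \<Rightarrow> ('v \<times> 'v) set \<Rightarrow> 'v set \<Rightarrow> bool" where
  "hypomorphic r V1 A1 V2 A2 X0 \<longleftrightarrow>
     (\<forall>Y. Y \<subset> X0 \<and> card Y = r \<longrightarrow> sub_iso V1 A1 V2 A2 Y)"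

definition reconstructible :: "nat \<Rightarrow> 'v set \<Rightarrow> ('v \<times> 'v) set \<Rightarrow> 'v set \<Rightarrow> bool" where
  "reconstructible r V A X0 \<longleftrightarrow>
     (\<forall>V' A'. pedigree V' A' X0 \<and> hypomorphic r V A V' A' X0 \<longrightarrow> sub_iso V A V' A' X0)"

end

theory Submission imports Defs begin
definition XX :: "nat \<Rightarrow> nat" where "XX j = 5*j"
definition AA :: "nat \<Rightarrow> nat" where "AA j = 5*j+1"
definition BB :: "nat \<Rightarrow> nat" where "BB j = 5*j+2"
definition SA :: "nat \<Rightarrow> nat" where "SA j = 5*j+3"
definition SB :: "nat \<Rightarrow> nat" where "SB j = 5*j+4"

lemmas vdefs = XX_def AA_def BB_def SA_def SB_def

lemma vinj[simp]: "XX i = XX j \<longleftrightarrow> i = j" "AA i = AA j \<longleftrightarrow> i = j" "BB i = BB j \<longleftrightarrow> i = j"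
  "SA i = SA j \<longleftrightarrow> i = j" "SB i = SB j \<longleftrightarrow> i = j"
  by (auto simp: vdefs)

lemma vdist[simp]: "XX i \<noteq> AA j" "XX i \<noteq> BB j" "XX i \<noteq> SA j" "XX i \<noteq> SB j"
  "AA i \<noteq> XX j" "AA i \<noteq> BB j" "AA i \<noteq> SA j" "AA i \<noteq> SB j"
  "BB i \<noteq> XX j" "BB i \<noteq> AA j" "BB i \<noteq> SA j" "BB i \<noteq> SB j"
  "SA i \<noteq> XX j" "SA i \<noteq> AA j" "SA i \<noteq> BB j" "SA i \<noteq> SB j"
  "SB i \<noteq> XX j" "SB i \<noteq> AA j" "SB i \<noteq> BB j" "SB i \<noteq> SA j"
  unfolding vdefs by presburger+

lemma vdm[simp]: "XX j div 5 = j" "AA j div 5 = j" "BB j div 5 = j" "SA j div 5 = j" "SB j div 5 = j"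
  "XX j mod 5 = 0" "AA j mod 5 = 1" "BB j mod 5 = 2" "SA j mod 5 = 3" "SB j mod 5 = 4"
  unfolding vdefs by presburger+

lemma vlt[simp]: "XX j < 5*n \<longleftrightarrow> j < n" "AA j < 5*n \<longleftrightarrow> j < n" "BB j < 5*n \<longleftrightarrow> j < n"
  "SA j < 5*n \<longleftrightarrow> j < n" "SB j < 5*n \<longleftrightarrow> j < n"
  unfolding vdefs by linarith+

lemma vcases: obtains j where "v = XX j" | j where "v = AA j" | j where "v = BB j"
  | j where "v = SA j" | j where "v = SB j"
proof -
  have e: "v = 5 * (v div 5) + v mod 5" by simp
  have "v mod 5 < 5" by simp
  then have "v mod 5 = 0 \<or> v mod 5 = 1 \<or> v mod 5 = 2 \<or> v mod 5 = 3 \<or> v mod 5 = 4" by linarith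
  then show ?thesis
  proof (elim disjE)
    assume "v mod 5 = 0" then have "v = XX (v div 5)" using e unfolding vdefs by linarith
    then show ?thesis using that by blast
  next
    assume "v mod 5 = 1" then have "v = AA (v div 5)" using e unfolding vdefs by linarith
    then show ?thesis using that by blast
  next
    assume "v mod 5 = 2" then have "v = BB (v div 5)" using e unfolding vdefs by linarith
    then show ?thesis using that by blast
  next
    assume "v mod 5 = 3" then have "v = SA (v div 5)" using e unfolding vdefs by linarith
    then show ?thesis using that by blast
  next
    assume "v mod 5 = 4" then have "v = SB (v div 5)" using e unfolding vdefs by linarith
    then show ?thesis using that by blast
  qed
qed

definition pA :: "bool \<Rightarrow> nat \<Rightarrow> nat \<Rightarrow> nat" where
 "pA tw n j = (if Suc j = n then (if tw then SB 0 else SA 0) else SA (Suc j))"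
definition pB :: "bool \<Rightarrow> nat \<Rightarrow> nat \<Rightarrow> nat" where
 "pB tw n j = (if Suc j = n then (if tw then SA 0 else SB 0) else SB (Suc j))"
definition par :: "bool \<Rightarrow> nat \<Rightarrow> nat \<Rightarrow> nat set" where
 "par tw n v = (if v mod 5 = 0 then {AA (v div 5), BB (v div 5)}
    else if v mod 5 = 1 then {SA (v div 5), pA tw n (v div 5)}
    else if v mod 5 = 2 then {SB (v div 5), pB tw n (v div 5)} else {})"
definition sw :: "nat \<Rightarrow> nat \<Rightarrow> nat" where
 "sw k v = (if k < v div 5 then (if v mod 5 = 1 then BB (v div 5) else if v mod 5 = 2 then AA (v div 5)
    else if v mod 5 = 3 then SB (v div 5) else if v mod 5 = 4 then SA (v div 5) else v) else v)"
definition Ar :: "bool \<Rightarrow> nat \<Rightarrow> (nat \<times> nat) set" where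
 "Ar tw n = {(u,w). u < 5*n \<and> w \<in> par tw n u}"
definition Vn :: "nat \<Rightarrow> nat set" where "Vn n = {..<5*n}"
definition Xn :: "nat \<Rightarrow> nat set" where "Xn n = XX ` {..<n}"
definition Sk :: "nat \<Rightarrow> nat \<Rightarrow> nat set" where "Sk k n = Vn n - {XX k, AA k, BB k}"

lemma par_simps[simp]: "par tw n (XX j) = {AA j, BB j}" "par tw n (AA j) = {SA j, pA tw n j}"
  "par tw n (BB j) = {SB j, pB tw n j}" "par tw n (SA j) = {}" "par tw n (SB j) = {}"
  unfolding par_def by simp_all

lemma sw_simps[simp]: "sw k (XX j) = XX j" "sw k (AA j) = (if k < j then BB j else AA j)"
  "sw k (BB j) = (if k < j then AA j else BB j)" "sw k (SA j) = (if k < j then SB j else SA j)"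
  "sw k (SB j) = (if k < j then SA j else SB j)"
  unfolding sw_def by simp_all

lemma sw_sw: "sw k (sw k v) = v"
  by (cases v rule: vcases) auto

lemma inj_sw: "inj (sw k)"
  by (metis injI sw_sw)

lemma arc_iff: "(u, w) \<in> Ar tw n \<longleftrightarrow> u < 5*n \<and> w \<in> par tw n u"
  unfolding Ar_def by simp

lemma pA_lt: "j < n \<Longrightarrow> pA tw n j < 5*n"
  unfolding pA_def by (auto simp: vdefs)
lemma pB_lt: "j < n \<Longrightarrow> pB tw n j < 5*n"
  unfolding pB_def by (auto simp: vdefs)

lemma par_sub: "u < 5*n \<Longrightarrow> w \<in> par tw n u \<Longrightarrow> w < 5*n"
  by (cases u rule: vcases) (auto simp: pA_lt pB_lt)

lemma par_noX: "w \<in> par tw n u \<Longrightarrow> w \<noteq> XX j"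
  by (cases u rule: vcases) (auto simp: pA_def pB_def split: if_splits)

lemma par_AA: "AA k \<in> par tw n u \<Longrightarrow> u = XX k"
  by (cases u rule: vcases) (auto simp: pA_def pB_def split: if_splits)

lemma par_BB: "BB k \<in> par tw n u \<Longrightarrow> u = XX k"
  by (cases u rule: vcases) (auto simp: pA_def pB_def split: if_splits)

lemma par_card: "2 \<le> n \<Longrightarrow> card (par tw n u) = 0 \<or> card (par tw n u) = 2"
  by (cases u rule: vcases) (auto simp: pA_def pB_def split: if_splits)

lemma par_noloop: "u \<notin> par tw n u"
  by (cases u rule: vcases) (auto simp: pA_def pB_def split: if_splits)

lemma ped: assumes "2 \<le> n" shows "pedigree (Vn n) (Ar tw n) (Xn n)"
proof -
  have out: "{w. (v, w) \<in> Ar tw n} = par tw n v" if "v \<in> Vn n" for v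
    using that by (auto simp: arc_iff Vn_def)
  have iso: "\<exists>w. (v, w) \<in> Ar tw n \<or> (w, v) \<in> Ar tw n" if "v \<in> Vn n" for v
  proof (cases v rule: vcases)
    case (1 j) then show ?thesis using that by (auto simp: arc_iff Vn_def)
  next
    case (2 j) then show ?thesis using that by (auto simp: arc_iff Vn_def)
  next
    case (3 j) then show ?thesis using that by (auto simp: arc_iff Vn_def)
  next
    case (4 j) then have "(AA j, v) \<in> Ar tw n" using that by (auto simp: arc_iff Vn_def)
    then show ?thesis by blast
  next
    case (5 j) then have "(BB j, v) \<in> Ar tw n" using that by (auto simp: arc_iff Vn_def)
    then show ?thesis by blast
  qed
  show ?thesis unfolding pedigree_def
  proof (intro conjI ballI allI)
    show "finite (Vn n)" by (simp add: Vn_def)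
    show "Ar tw n \<subseteq> Vn n \<times> Vn n" using par_sub by (auto simp: arc_iff Vn_def)
    fix v show "(v, v) \<notin> Ar tw n" using par_noloop by (simp add: arc_iff)
  next
    fix v assume "v \<in> Vn n"
    then show "card {w. (v, w) \<in> Ar tw n} = 0 \<or> card {w. (v, w) \<in> Ar tw n} = 2"
      using out par_card[OF assms] by simp
  next
    show "Xn n \<subseteq> Vn n" by (auto simp: Xn_def Vn_def)
  next
    fix x u assume "x \<in> Xn n"
    then obtain j where "x = XX j" by (auto simp: Xn_def)
    then show "(u, x) \<notin> Ar tw n" using par_noX by (metis arc_iff)
  next
    fix v assume "v \<in> Vn n" then show "\<exists>w. (v, w) \<in> Ar tw n \<or> (w, v) \<in> Ar tw n" by (rule iso)
  qed
qed

lemma step: "u < 5*n \<Longrightarrow> w \<in> par tw n u \<Longrightarrow> (u, w) \<in> (Ar tw n)\<^sup>*"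
  by (simp add: arc_iff r_into_rtrancl)

lemma reach_own: assumes "j < n"
  shows "(XX j, XX j) \<in> (Ar tw n)\<^sup>*" "(XX j, AA j) \<in> (Ar tw n)\<^sup>*" "(XX j, BB j) \<in> (Ar tw n)\<^sup>*"
    "(XX j, SA j) \<in> (Ar tw n)\<^sup>*" "(XX j, SB j) \<in> (Ar tw n)\<^sup>*"
proof -
  show a: "(XX j, AA j) \<in> (Ar tw n)\<^sup>*" "(XX j, BB j) \<in> (Ar tw n)\<^sup>*" using assms by (auto intro!: step)
  show "(XX j, XX j) \<in> (Ar tw n)\<^sup>*" by simp
  have "(AA j, SA j) \<in> Ar tw n" "(BB j, SB j) \<in> Ar tw n" using assms by (auto simp: arc_iff)
  then show "(XX j, SA j) \<in> (Ar tw n)\<^sup>*" "(XX j, SB j) \<in> (Ar tw n)\<^sup>*"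
    using a by (auto intro: rtrancl_into_rtrancl)
qed

lemma reach_other: assumes "j < n" "2 \<le> n"
  shows "\<exists>m<n. m \<noteq> j \<and> (XX m, SA j) \<in> (Ar tw n)\<^sup>*"  "\<exists>m<n. m \<noteq> j \<and> (XX m, SB j) \<in> (Ar tw n)\<^sup>*"
proof -
  have r: "(XX m, v) \<in> (Ar tw n)\<^sup>*" if "m < n" "v \<in> par tw n (AA m) \<or> v \<in> par tw n (BB m)" for m v
  proof -
    have "(AA m, v) \<in> Ar tw n \<or> (BB m, v) \<in> Ar tw n" using that by (auto simp: arc_iff)
    then show ?thesis using reach_own(2,3)[OF that(1), of tw] by (auto intro: rtrancl_into_rtrancl)
  qed
  have "(\<exists>m<n. m \<noteq> j \<and> (XX m, SA j) \<in> (Ar tw n)\<^sup>*) \<and> (\<exists>m<n. m \<noteq> j \<and> (XX m, SB j) \<in> (Ar tw n)\<^sup>*)"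
  proof (cases j)
    case 0
    have m: "n - 1 < n" "n - 1 \<noteq> j" "Suc (n - 1) = n" using assms 0 by auto
    have "(XX (n-1), SA 0) \<in> (Ar tw n)\<^sup>*" "(XX (n-1), SB 0) \<in> (Ar tw n)\<^sup>*"
      using r[OF m(1), of "SA 0"] r[OF m(1), of "SB 0"] m 0 by (cases tw; simp add: pA_def pB_def)+
    then show ?thesis using m 0 by blast
  next
    case (Suc i)
    have m: "i < n" "i \<noteq> j" "Suc i \<noteq> n" using assms Suc by auto
    show ?thesis
      using r[OF m(1), of "SA j"] r[OF m(1), of "SB j"] m Suc by (auto simp: pA_def pB_def)
  qed
  then show "\<exists>m<n. m \<noteq> j \<and> (XX m, SA j) \<in> (Ar tw n)\<^sup>*"  "\<exists>m<n. m \<noteq> j \<and> (XX m, SB j) \<in> (Ar tw n)\<^sup>*"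
    by auto
qed

lemma subV_all: "sub_vertices (Vn n) (Ar tw n) (Xn n) = Vn n"
proof -
  have "\<exists>y\<in>Xn n. (y, v) \<in> (Ar tw n)\<^sup>*" if "v \<in> Vn n" for v
  proof (cases v rule: vcases)
    case (1 j) then show ?thesis using that reach_own(1)[of j n tw] by (auto simp: Xn_def Vn_def)
  next
    case (2 j) then show ?thesis using that reach_own(2)[of j n tw] by (auto simp: Xn_def Vn_def)
  next
    case (3 j) then show ?thesis using that reach_own(3)[of j n tw] by (auto simp: Xn_def Vn_def)
  next
    case (4 j) then show ?thesis using that reach_own(4)[of j n tw] by (auto simp: Xn_def Vn_def)
  next
    case (5 j) then show ?thesis using that reach_own(5)[of j n tw] by (auto simp: Xn_def Vn_def)
  qed
  then show ?thesis unfolding sub_vertices_def by auto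
qed

lemma closed: assumes "(y, v) \<in> (Ar tw n)\<^sup>*" "y \<in> Sk k n" shows "v \<in> Sk k n"
  using assms
proof (induction rule: rtrancl_induct)
  case base then show ?case .
next
  case (step v w)
  then have "w \<in> par tw n v" "v < 5*n" "v \<in> Sk k n" by (auto simp: arc_iff)
  then have "w < 5*n" "w \<noteq> XX k" "w \<noteq> AA k" "w \<noteq> BB k"
    using par_sub par_noX par_AA par_BB by (auto simp: Sk_def)
  then show ?case by (simp add: Sk_def Vn_def)
qed

lemma subV_del: assumes "k < n" "2 \<le> n"
  shows "sub_vertices (Vn n) (Ar tw n) (Xn n - {XX k}) = Sk k n"
proof
  show "sub_vertices (Vn n) (Ar tw n) (Xn n - {XX k}) \<subseteq> Sk k n"
  proof
    fix v assume "v \<in> sub_vertices (Vn n) (Ar tw n) (Xn n - {XX k})"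
    then obtain y where "y \<in> Xn n - {XX k}" "(y, v) \<in> (Ar tw n)\<^sup>*" unfolding sub_vertices_def by auto
    moreover then have "y \<in> Sk k n" by (auto simp: Xn_def Sk_def Vn_def)
    ultimately show "v \<in> Sk k n" using closed by blast
  qed
next
  show "Sk k n \<subseteq> sub_vertices (Vn n) (Ar tw n) (Xn n - {XX k})"
  proof
    fix v assume v: "v \<in> Sk k n"
    have "\<exists>y\<in>Xn n - {XX k}. (y, v) \<in> (Ar tw n)\<^sup>*"
    proof (cases v rule: vcases)
      case (1 j) then show ?thesis using v reach_own(1)[of j n tw] by (auto simp: Xn_def Sk_def Vn_def)
    next
      case (2 j) then show ?thesis using v reach_own(2)[of j n tw] by (auto simp: Xn_def Sk_def Vn_def)
    next
      case (3 j) then show ?thesis using v reach_own(3)[of j n tw] by (auto simp: Xn_def Sk_def Vn_def)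
    next
      case (4 j)
      then have j: "j < n" using v by (auto simp: Sk_def Vn_def)
      show ?thesis
      proof (cases "j = k")
        case True
        then show ?thesis using reach_other(1)[OF j assms(2), of tw] 4 by (auto simp: Xn_def)
      next
        case False then show ?thesis using reach_own(4)[OF j, of tw] 4 j by (auto simp: Xn_def)
      qed
    next
      case (5 j)
      then have j: "j < n" using v by (auto simp: Sk_def Vn_def)
      show ?thesis
      proof (cases "j = k")
        case True
        then show ?thesis using reach_other(2)[OF j assms(2), of tw] 5 by (auto simp: Xn_def)
      next
        case False then show ?thesis using reach_own(5)[OF j, of tw] 5 j by (auto simp: Xn_def)
      qed
    qed
    then show "v \<in> sub_vertices (Vn n) (Ar tw n) (Xn n - {XX k})"
      using v unfolding sub_vertices_def Sk_def by auto
  qed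
qed

lemma sw_Sk: "v \<in> Sk k n \<Longrightarrow> sw k v \<in> Sk k n"
  by (cases v rule: vcases) (auto simp: Sk_def Vn_def)

lemma key: assumes "k < n" "u \<in> Sk k n"
  shows "par True n (sw k u) = sw k ` par False n u"
  using assms by (cases u rule: vcases) (auto simp: Sk_def Vn_def pA_def pB_def)


lemma subA: "sub_arcs V A Y = A \<inter> (sub_vertices V A Y \<times> sub_vertices V A Y)"
  by (simp add: sub_arcs_def)

lemma iso_del: assumes "k < n" "2 \<le> n"
  shows "sub_iso (Vn n) (Ar False n) (Vn n) (Ar True n) (Xn n - {XX k})"
proof -
  have bij: "bij_betw (sw k) (Sk k n) (Sk k n)"
  proof -
    have "sw k ` Sk k n = Sk k n"
    proof
      show "sw k ` Sk k n \<subseteq> Sk k n" using sw_Sk by blast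
      show "Sk k n \<subseteq> sw k ` Sk k n"
      proof
        fix v assume "v \<in> Sk k n"
        then have "sw k v \<in> Sk k n" by (rule sw_Sk)
        then show "v \<in> sw k ` Sk k n" by (metis image_eqI sw_sw)
      qed
    qed
    then show ?thesis using inj_on_subset[OF inj_sw subset_UNIV] by (simp add: bij_betw_def)
  qed
  have arcs: "(u, v) \<in> Ar False n \<inter> (Sk k n \<times> Sk k n) \<longleftrightarrow>
      (sw k u, sw k v) \<in> Ar True n \<inter> (Sk k n \<times> Sk k n)" if "u \<in> Sk k n" "v \<in> Sk k n" for u v
  proof -
    have su: "sw k u \<in> Sk k n" "sw k v \<in> Sk k n" using that sw_Sk by auto
    have lt: "u < 5*n" "sw k u < 5*n" using that su by (auto simp: Sk_def Vn_def)
    have "sw k v \<in> par True n (sw k u) \<longleftrightarrow> v \<in> par False n u"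
      using key[OF assms(1) that(1)] inj_sw by (simp add: inj_image_mem_iff)
    then show ?thesis using that su lt by (simp add: arc_iff)
  qed
  have fixY: "\<forall>y\<in>Xn n - {XX k}. sw k y = y" by (auto simp: Xn_def)
  show ?thesis unfolding sub_iso_def iso_fixing_def subA subV_del[OF assms]
    using bij arcs fixY by blast
qed

lemma no_iso: assumes "3 \<le> n"
  shows "\<not> sub_iso (Vn n) (Ar False n) (Vn n) (Ar True n) (Xn n)"
proof
  assume "sub_iso (Vn n) (Ar False n) (Vn n) (Ar True n) (Xn n)"
  then obtain f where bij: "bij_betw f (Vn n) (Vn n)"
    and arcs: "\<And>u v. u \<in> Vn n \<Longrightarrow> v \<in> Vn n \<Longrightarrow>
       (u, v) \<in> Ar False n \<inter> (Vn n \<times> Vn n) \<longleftrightarrow> (f u, f v) \<in> Ar True n \<inter> (Vn n \<times> Vn n)"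
    and fx: "\<And>y. y \<in> Xn n \<Longrightarrow> f y = y"
    unfolding sub_iso_def iso_fixing_def subA subV_all by blast
  have P: "w \<in> par True n (f u)" if "u < 5*n" "w' \<in> par False n u" "f w' = w" for u w w'
  proof -
    have "w' < 5*n" using par_sub that by blast
    then have "(u, w') \<in> Ar False n \<inter> (Vn n \<times> Vn n)" using that by (auto simp: arc_iff Vn_def)
    then have "(f u, f w') \<in> Ar True n" using arcs that \<open>w' < 5*n\<close> by (auto simp: Vn_def)
    then show ?thesis using that by (simp add: arc_iff)
  qed
  have fA: "f (AA j) = AA j \<or> f (AA j) = BB j" if "j < n" for j
  proof -
    have "f (XX j) = XX j" using fx that by (auto simp: Xn_def)
    then show ?thesis using P[of "XX j" "AA j" "f (AA j)"] that by auto
  qed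
  have ind: "j < n \<Longrightarrow> (f (AA j) = AA j \<longleftrightarrow> f (AA 0) = AA 0)" for j
  proof (induction j)
    case 0 then show ?case by simp
  next
    case (Suc j)
    have j: "j < n" "Suc j \<noteq> n" using Suc by auto
    have g1: "f (SA (Suc j)) \<in> par True n (f (AA j))"
      using P[of "AA j" "SA (Suc j)"] j by (simp add: pA_def)
    have g2: "f (SA (Suc j)) \<in> par True n (f (AA (Suc j)))"
      using P[of "AA (Suc j)" "SA (Suc j)"] Suc by simp
    have "f (AA (Suc j)) = AA (Suc j) \<longleftrightarrow> f (AA j) = AA j"
      using fA[OF j(1)] fA[OF Suc.prems] g1 g2 j assms
      by (auto simp: pA_def pB_def split: if_splits)
    then show ?case using Suc by simp
  qed
  have m: "n - 1 < n" "Suc (n - 1) = n" "0 < n" using assms by auto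
  have g1: "f (SA 0) \<in> par True n (f (AA (n-1)))"
    using P[of "AA (n-1)" "SA 0"] m by (simp add: pA_def)
  have g2: "f (SA 0) \<in> par True n (f (AA 0))"
    using P[of "AA 0" "SA 0"] m by simp
  have n1: "Suc 0 \<noteq> n" "n - 1 \<noteq> 0" "n - 1 \<noteq> 1" using assms by auto
  show False
    using fA[OF m(1)] fA[OF m(3)] ind[OF m(1)] g1 g2 m n1
    by (auto simp: pA_def pB_def split: if_splits)
qed

lemma card_Xn: "card (Xn n) = n"
  unfolding Xn_def by (subst card_image) (auto simp: inj_on_def)

lemma Ydel: assumes "Y \<subset> Xn n" "card Y = n - 1"
  shows "\<exists>k<n. Y = Xn n - {XX k}"
proof -
  obtain x where x: "x \<in> Xn n" "x \<notin> Y" using assms by blast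
  then obtain k where k: "k < n" "x = XX k" by (auto simp: Xn_def)
  have sub: "Y \<subseteq> Xn n - {XX k}" using assms x k by blast
  have fin: "finite (Xn n - {XX k})" by (simp add: Xn_def)
  have "card (Xn n - {XX k}) = n - 1" using x k card_Xn by (simp add: Xn_def)
  then have "Y = Xn n - {XX k}" using card_subset_eq[OF fin sub] assms by simp
  then show ?thesis using k by blast
qed

theorem mainTheorem1:
  shows "(\<forall>n::nat. n > 2 \<longrightarrow>
           (\<exists>(X0::nat set) V A V' A'. card X0 = n \<and> pedigree V A X0 \<and> pedigree V' A' X0 \<and>
              (\<forall>Y. Y \<subset> X0 \<and> card Y = n - 1 \<longrightarrow> sub_iso V A V' A' Y) \<and>
              \<not> sub_iso V A V' A' X0))
       \<and> (\<forall>n::nat. n > 3 \<longrightarrow>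
           (\<exists>(X0::nat set) V A. card X0 = n \<and> pedigree V A X0 \<and> \<not> reconstructible (n - 1) V A X0))"
proof -
  have hyp: "\<forall>Y. Y \<subset> Xn n \<and> card Y = n - 1 \<longrightarrow> sub_iso (Vn n) (Ar False n) (Vn n) (Ar True n) Y"
    if "2 \<le> n" for n
    using Ydel iso_del that by blast
  have A: "card (Xn n) = n \<and> pedigree (Vn n) (Ar False n) (Xn n) \<and> pedigree (Vn n) (Ar True n) (Xn n) \<and>
      (\<forall>Y. Y \<subset> Xn n \<and> card Y = n - 1 \<longrightarrow> sub_iso (Vn n) (Ar False n) (Vn n) (Ar True n) Y) \<and>
      \<not> sub_iso (Vn n) (Ar False n) (Vn n) (Ar True n) (Xn n)" if "n > 2" for n
    using that card_Xn ped hyp no_iso by auto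
  show ?thesis
  proof (intro conjI allI impI)
    fix n :: nat assume "n > 2"
    then show "\<exists>(X0::nat set) V A V' A'. card X0 = n \<and> pedigree V A X0 \<and> pedigree V' A' X0 \<and>
              (\<forall>Y. Y \<subset> X0 \<and> card Y = n - 1 \<longrightarrow> sub_iso V A V' A' Y) \<and>
              \<not> sub_iso V A V' A' X0" using A by blast
  next
    fix n :: nat assume "n > 3"
    then have "n > 2" by simp
    then have "card (Xn n) = n \<and> pedigree (Vn n) (Ar False n) (Xn n) \<and> \<not> reconstructible (n - 1) (Vn n) (Ar False n) (Xn n)"
      using A[of n] unfolding reconstructible_def hypomorphic_def by blast
    then show "\<exists>(X0::nat set) V A. card X0 = n \<and> pedigree V A X0 \<and> \<not> reconstructible (n - 1) V A X0"
      by blast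
  qed
qed

end
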